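(* Consider an open quantum system on a finite-dimensional Hilbert space $\mathcal H$ with Hamiltonian $H$ and coupling operators $L_1,\dots,L_K$. Let $W_1,\dots,W_N$ be observables commuting with $H$, each positive semidefinite with smallest eigenvalue $0$, and let $W=\sum_{\lambda=1}^NW_\lambda$. Suppose that for each $\lambda\in\{1,\dots,N\}$ there exists an index $k\in\{1,\dots,K\}$ and a constant $c_\lambda>0$ such that $\mathcal G(W_\lambda)_{L_k}\le -c_\lambda W_\lambda$ and $\sum_{k'=1,k'\neq k}^K\mathcal G(W_\lambda)_{L_{k'}}\le0$. Then $W$ is asymptotically ground-state stable.
   Context: The density state (positive semidefinite, trace one) evolves by $\dot\rho_t=-i[H,\rho_t]+\sum_{k=1}^K\big(L_k\rho_tL_k^\dagger-\tfrac12L_k^\dagger L_k\rho_t-\tfrac12\rho_tL_k^\dagger L_k\big)$. For an observable $X$ the single-channel generator component is $\mathcal G(X)_{L_k}=L_k^\dagger XL_k-\tfrac12L_k^\dagger L_kX-\tfrac12XL_k^\dagger L_k$, and for $X$ commuting with $H$, $\frac{d}{dt}\operatorname{tr}(X\rho_t)=\operatorname{tr}(\mathcal G(X)\rho_t)$ with $\mathcal G(X)=\sum_k\mathcal G(X)_{L_k}$. An observable $X$ with smallest eigenvalue $d$ is asymptotically ground-state stable if $\operatorname{tr}(X\rho_t)\to d$ as $t\to\infty$ for every initial density state $\rho_0$. *)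

theory Defs
  imports "HOL-Analysis.Analysis"
begin

type_synonym 'n cmat = "complex^'n^'n"

definition adj :: "'n::finite cmat \<Rightarrow> 'n cmat" where
  "adj A = (\<chi> i j. cnj (A $ j $ i))"

definition cscale :: "complex \<Rightarrow> 'n::finite cmat \<Rightarrow> 'n cmat" where
  "cscale c A = (\<chi> i j. c * A $ i $ j)"

definition ctrace :: "'n::finite cmat \<Rightarrow> complex" where
  "ctrace A = (\<Sum>i\<in>UNIV. A $ i $ i)"

definition cinner :: "complex^'n::finite \<Rightarrow> complex^'n \<Rightarrow> complex" where
  "cinner x y = (\<Sum>i\<in>UNIV. cnj (x $ i) * y $ i)"

definition hermitian :: "'n::finite cmat \<Rightarrow> bool" where
  "hermitian A \<longleftrightarrow> adj A = A"

definition psd :: "'n::finite cmat \<Rightarrow> bool" where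
  "psd A \<longleftrightarrow> hermitian A \<and> (\<forall>x. 0 \<le> Re (cinner x (A *v x)))"

definition loewner_le :: "'n::finite cmat \<Rightarrow> 'n cmat \<Rightarrow> bool" where
  "loewner_le A B \<longleftrightarrow> psd (B - A)"

definition is_eigenvalue :: "'n::finite cmat \<Rightarrow> complex \<Rightarrow> bool" where
  "is_eigenvalue A c \<longleftrightarrow> (\<exists>v. v \<noteq> 0 \<and> A *v v = c *s v)"

text \<open>\<open>d\<close> is the smallest eigenvalue of the (Hermitian, hence real-spectrum) observable \<open>X\<close>.\<close>
definition is_min_eigenvalue :: "'n::finite cmat \<Rightarrow> real \<Rightarrow> bool" where
  "is_min_eigenvalue X d \<longleftrightarrow>
     is_eigenvalue X (complex_of_real d) \<and> (\<forall>c. is_eigenvalue X c \<longrightarrow> d \<le> Re c)"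

definition density :: "'n::finite cmat \<Rightarrow> bool" where
  "density \<rho> \<longleftrightarrow> psd \<rho> \<and> ctrace \<rho> = 1"

definition gen :: "'n::finite cmat \<Rightarrow> 'n cmat \<Rightarrow> 'n cmat" where
  "gen L X = adj L ** X ** L - cscale (1/2) (adj L ** L ** X) - cscale (1/2) (X ** adj L ** L)"

definition lindblad :: "'n::finite cmat \<Rightarrow> (nat \<Rightarrow> 'n cmat) \<Rightarrow> nat \<Rightarrow> 'n cmat \<Rightarrow> 'n cmat" where
  "lindblad H L K \<rho> =
     cscale (- \<i>) (H ** \<rho> - \<rho> ** H)
     + (\<Sum>k\<in>{1..K}. L k ** \<rho> ** adj (L k) - cscale (1/2) (adj (L k) ** L k ** \<rho>)
                                              - cscale (1/2) (\<rho> ** adj (L k) ** L k))"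

definition lindblad_solution :: "'n::finite cmat \<Rightarrow> (nat \<Rightarrow> 'n cmat) \<Rightarrow> nat \<Rightarrow> (real \<Rightarrow> 'n cmat) \<Rightarrow> bool" where
  "lindblad_solution H L K \<rho> \<longleftrightarrow>
     (\<forall>t\<ge>0. (\<rho> has_vector_derivative lindblad H L K (\<rho> t)) (at t within {0..}))"

definition agss :: "'n::finite cmat \<Rightarrow> (nat \<Rightarrow> 'n cmat) \<Rightarrow> nat \<Rightarrow> 'n cmat \<Rightarrow> bool" where
  "agss H L K X \<longleftrightarrow>
     (\<forall>d \<rho>. is_min_eigenvalue X d \<longrightarrow> lindblad_solution H L K \<rho> \<longrightarrow> density (\<rho> 0) \<longrightarrow>
        ((\<lambda>t. ctrace (X ** \<rho> t)) \<longlongrightarrow> complex_of_real d) at_top)"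

end

theory Submission
  imports Defs
begin

definition qf :: "'n::finite cmat \<Rightarrow> complex^'n \<Rightarrow> complex" where
  "qf A x = cinner x (A *v x)"

definition outer :: "complex^'n::finite \<Rightarrow> 'n cmat" where
  "outer v = (\<chi> i j. v $ i * cnj (v $ j))"

lemma cinner_add_right: "cinner x (y + z) = cinner x y + cinner x z"
  by (simp add: cinner_def distrib_left sum.distrib)
lemma cinner_add_left: "cinner (x + y) z = cinner x z + cinner y z"
  by (simp add: cinner_def distrib_right sum.distrib)
lemma cinner_diff_right: "cinner x (y - z) = cinner x y - cinner x z"
  by (simp add: cinner_def right_diff_distrib sum_subtractf)
lemma cinner_diff_left: "cinner (x - y) z = cinner x z - cinner y z"
  by (simp add: cinner_def left_diff_distrib sum_subtractf)
lemma cinner_scale_right: "cinner x (c *s y) = c * cinner x y"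
  by (simp add: cinner_def sum_distrib_left mult_ac)
lemma cinner_scale_left: "cinner (c *s x) y = cnj c * cinner x y"
  by (simp add: cinner_def sum_distrib_left mult_ac)
lemma cinner_zero_right[simp]: "cinner x 0 = 0"
  by (simp add: cinner_def)
lemma cinner_zero_left[simp]: "cinner 0 x = 0"
  by (simp add: cinner_def)
lemma cinner_cnj: "cnj (cinner x y) = cinner y x"
  by (simp add: cinner_def mult_ac)
lemma cinner_sum_right: "cinner x (sum f S) = (\<Sum>s\<in>S. cinner x (f s))"
  unfolding cinner_def sum_component sum_distrib_left by (rule sum.swap)

lemma cinner_adj: "cinner x (A *v y) = cinner (adj A *v x) y"
proof -
  have "cinner x (A *v y) = (\<Sum>i\<in>UNIV. \<Sum>j\<in>UNIV. cnj(x$i) * A$i$j * y$j)"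
    by (simp add: cinner_def matrix_vector_mult_def sum_distrib_left mult.assoc)
  also have "\<dots> = (\<Sum>j\<in>UNIV. \<Sum>i\<in>UNIV. cnj(x$i) * A$i$j * y$j)"
    by (rule sum.swap)
  also have "\<dots> = cinner (adj A *v x) y"
    by (simp add: cinner_def adj_def matrix_vector_mult_def sum_distrib_left cnj_sum mult.commute mult.left_commute)
  finally show ?thesis .
qed

lemma cinner_self: "cinner x x = complex_of_real ((norm x)^2)"
proof -
  have "(norm x)^2 = (\<Sum>i\<in>UNIV. (cmod (x $ i))^2)"
    by (simp add: norm_vec_def L2_set_def sum_nonneg)
  moreover have "\<And>z. cnj z * z = complex_of_real ((cmod z)^2)"
    by (metis complex_norm_square mult.commute)
  ultimately show ?thesis
    by (simp add: cinner_def of_real_sum)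
qed
lemma cinner_self_eq0: "cinner x x = 0 \<longleftrightarrow> x = 0"
  by (simp add: cinner_self)
lemma cinner_axis: "cinner (axis i 1) y = y $ i"
proof -
  have "(\<Sum>j\<in>UNIV. cnj ((axis i 1)$j) * y$j) = (\<Sum>j\<in>UNIV. if j = i then y$j else 0)"
    by (rule sum.cong) (auto simp: axis_def)
  then show ?thesis by (simp add: cinner_def)
qed

lemma adj_adj[simp]: "adj (adj A) = A"
  by (simp add: adj_def vec_eq_iff)
lemma adj_mult: "adj (A ** B) = adj B ** adj A"
  by (simp add: adj_def matrix_matrix_mult_def vec_eq_iff mult.commute)
lemma adj_add: "adj (A + B) = adj A + adj B"
  by (simp add: adj_def vec_eq_iff)
lemma adj_diff: "adj (A - B) = adj A - adj B"
  by (simp add: adj_def vec_eq_iff)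
lemma adj_cscale: "adj (cscale c A) = cscale (cnj c) (adj A)"
  by (simp add: adj_def cscale_def vec_eq_iff)
lemma adj_scaleR: "adj (r *\<^sub>R A) = r *\<^sub>R adj A"
  by (simp add: adj_def vec_eq_iff complex_cnj_scaleR)
lemma adj_sum: "adj (sum f S) = (\<Sum>s\<in>S. adj (f s))"
  by (simp add: adj_def vec_eq_iff sum_component)
lemma adj_zero[simp]: "adj 0 = 0"
  by (simp add: adj_def vec_eq_iff)
lemma adj_one[simp]: "adj (mat 1) = mat 1"
  by (simp add: adj_def vec_eq_iff mat_def)

lemma cscale_mult_left: "cscale c A ** B = cscale c (A ** B)"
  by (simp add: cscale_def matrix_matrix_mult_def vec_eq_iff sum_distrib_left mult_ac)
lemma cscale_mult_right: "A ** cscale c B = cscale c (A ** B)"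
  by (simp add: cscale_def matrix_matrix_mult_def vec_eq_iff sum_distrib_left mult_ac)
lemma cscale_add: "cscale c (A + B) = cscale c A + cscale c B"
  by (simp add: cscale_def vec_eq_iff distrib_left)
lemma cscale_diff: "cscale c (A - B) = cscale c A - cscale c B"
  by (simp add: cscale_def vec_eq_iff right_diff_distrib)
lemma cscale_cscale: "cscale c (cscale d A) = cscale (c*d) A"
  by (simp add: cscale_def vec_eq_iff)
lemma cscale_sum: "cscale c (sum f S) = (\<Sum>s\<in>S. cscale c (f s))"
  by (simp add: cscale_def vec_eq_iff sum_component sum_distrib_left)
lemma cscale_scaleR_comm: "cscale c (r *\<^sub>R A) = r *\<^sub>R cscale c A"
  by (simp add: cscale_def vec_eq_iff scaleR_conv_of_real[where 'a=complex] mult_ac)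
lemma cscale_of_real: "cscale (complex_of_real r) A = r *\<^sub>R A"
  by (simp add: cscale_def vec_eq_iff scaleR_conv_of_real[where 'a=complex])
lemma cscale_mv: "cscale c A *v x = c *s (A *v x)"
  by (simp add: cscale_def matrix_vector_mult_def vec_eq_iff sum_distrib_left mult_ac)
lemma scaleR_mv: "(r *\<^sub>R (A::'n::finite cmat)) *v x = r *\<^sub>R (A *v x)"
  unfolding matrix_vector_mult_def vec_eq_iff
  by (auto simp: scaleR_sum_right scaleR_conv_of_real[where 'a=complex] sum_distrib_left mult.assoc)
lemma sum_mv: "(sum f S :: 'n::finite cmat) *v x = (\<Sum>s\<in>S. f s *v x)"
  unfolding vec_eq_iff matrix_vector_mult_def sum_component sum_distrib_right
  by (simp add: sum_component sum.swap[of _ UNIV S])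

lemma scaleR_mult_left: "(r *\<^sub>R (A::'n::finite cmat)) ** B = r *\<^sub>R (A ** B)"
  by (rule scalar_matrix_assoc[symmetric])
lemma scaleR_mult_right: "(A::'n::finite cmat) ** (r *\<^sub>R B) = r *\<^sub>R (A ** B)"
  using matrix_scalar_ac[of A r B] scalar_matrix_assoc[of r A B] by metis

lemma ctrace_add: "ctrace (A + B) = ctrace A + ctrace B"
  by (simp add: ctrace_def sum.distrib)
lemma ctrace_diff: "ctrace (A - B) = ctrace A - ctrace B"
  by (simp add: ctrace_def sum_subtractf)
lemma ctrace_cscale: "ctrace (cscale c A) = c * ctrace A"
  by (simp add: ctrace_def cscale_def sum_distrib_left)
lemma ctrace_scaleR: "ctrace (r *\<^sub>R A) = r *\<^sub>R ctrace A"
  by (simp add: ctrace_def scaleR_sum_right)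
lemma ctrace_sum: "ctrace (sum f S) = (\<Sum>s\<in>S. ctrace (f s))"
  unfolding ctrace_def sum_component by (rule sum.swap)

lemma ctrace_comm: "ctrace (A ** B) = ctrace (B ** A)"
proof -
  have "ctrace (A ** B) = (\<Sum>i\<in>UNIV. \<Sum>j\<in>UNIV. A$i$j * B$j$i)"
    by (simp add: ctrace_def matrix_matrix_mult_def)
  also have "\<dots> = (\<Sum>j\<in>UNIV. \<Sum>i\<in>UNIV. A$i$j * B$j$i)"
    by (rule sum.swap)
  also have "\<dots> = ctrace (B ** A)"
    by (simp add: ctrace_def matrix_matrix_mult_def mult.commute)
  finally show ?thesis .
qed

lemma ctrace_adj: "ctrace (adj A) = cnj (ctrace A)"
  unfolding ctrace_def adj_def by (simp add: cnj_sum)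
lemma ctrace_outer: "ctrace (A ** outer v) = cinner v (A *v v)"
proof -
  have "ctrace (A ** outer v) = (\<Sum>i\<in>UNIV. \<Sum>j\<in>UNIV. A$i$j * v$j * cnj (v$i))"
    by (simp add: ctrace_def matrix_matrix_mult_def outer_def mult.assoc)
  also have "\<dots> = cinner v (A *v v)"
    by (simp add: cinner_def matrix_vector_mult_def sum_distrib_left mult_ac)
  finally show ?thesis .
qed

lemma mv_smult: "(A::'n::finite cmat) *v (c *s x) = c *s (A *v x)"
  by (simp add: matrix_vector_mult_def vec_eq_iff sum_distrib_left mult_ac)

lemma herm_cinner: "hermitian A \<Longrightarrow> cinner y (A *v x) = cnj (cinner x (A *v y))"
  by (metis cinner_adj cinner_cnj hermitian_def)

lemma qf_real: "hermitian A \<Longrightarrow> qf A x = complex_of_real (Re (qf A x))"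
proof -
  assume h: "hermitian A"
  have "cnj (qf A x) = qf A x" using herm_cinner[OF h, of x x] by (simp add: qf_def)
  then have "Im (qf A x) = 0" by (metis cnj.sel(2) neg_equal_zero)
  then show ?thesis by (simp add: complex_eq_iff)
qed

lemma qf_expand:
  assumes "hermitian A"
  shows "qf A (x + t *s y) = qf A x + t * cinner x (A *v y) + cnj t * cnj (cinner x (A *v y)) + cnj t * t * qf A y"
  unfolding qf_def
  by (simp add: matrix_vector_right_distrib mv_smult cinner_add_left cinner_add_right cinner_scale_left
      cinner_scale_right herm_cinner[OF assms, of y x] algebra_simps)

lemma psd_kernel:
  assumes "psd A" "Re (qf A x) = 0"
  shows "A *v x = 0"
proof -
  have hA: "hermitian A" using assms(1) by (simp add: psd_def)
  define y where "y = A *v x"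
  define nn where "nn = (norm y)^2"
  define p where "p = Re (qf A y)"
  have p0: "p \<ge> 0" using assms(1) by (simp add: psd_def p_def qf_def)
  have c: "cinner x (A *v y) = complex_of_real nn"
    using hA by (simp add: cinner_adj hermitian_def cinner_self nn_def y_def)
  have key: "0 \<le> 2*u*nn + u^2*p" for u :: real
  proof -
    have "0 \<le> Re (qf A (x + complex_of_real u *s y))"
      using assms(1) by (simp add: psd_def qf_def)
    also have "\<dots> = 2*u*nn + u^2*p"
      by (simp add: qf_expand[OF hA] c p_def power2_eq_square assms(2))
    finally show ?thesis .
  qed
  define u where "u = - nn / (p+1)"
  have e: "u * (p+1) = - nn" using p0 by (simp add: u_def)
  have "(p+1)^2 * (2*u*nn + u^2*p) = 2*(u*(p+1))*nn*(p+1) + (u*(p+1))^2*p"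
    by (simp add: algebra_simps power2_eq_square)
  also have "\<dots> = - (nn^2 * (p+2))"
    by (simp only: e) (simp add: algebra_simps power2_eq_square)
  finally have "(p+1)^2 * (2*u*nn + u^2*p) = - (nn^2 * (p+2))" .
  moreover have "0 \<le> (p+1)^2 * (2*u*nn + u^2*p)"
    using key[of u] by simp
  ultimately have "nn^2 * (p+2) \<le> 0" by linarith
  moreover have "nn^2 * (p+2) \<ge> 0" using p0 by simp
  ultimately have "nn^2 * (p+2) = 0" by linarith
  then have "nn = 0" using p0 by simp
  then show ?thesis by (simp add: nn_def y_def)
qed

lemma psd_CS:
  assumes "psd A"
  shows "(cmod (cinner x (A *v y)))^2 \<le> Re (qf A x) * Re (qf A y)"
proof -
  have hA: "hermitian A" using assms(1) by (simp add: psd_def)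
  define b where "b = cinner x (A *v y)"
  define a where "a = Re (qf A x)"
  have a0: "a \<ge> 0" using assms by (simp add: psd_def a_def qf_def)
  show ?thesis
  proof (cases "a = 0")
    case True
    then have "A *v x = 0" using psd_kernel[OF assms] by (simp add: a_def)
    then have "b = 0" using hA by (simp add: b_def cinner_adj hermitian_def)
    then show ?thesis using True by (simp add: b_def a_def)
  next
    case False
    then have apos: "a > 0" using a0 by simp
    define t where "t = - b / complex_of_real a"
    have qx: "qf A x = complex_of_real a" using qf_real[OF hA, of x] unfolding a_def .
    have cb: "cinner y (A *v x) = cnj b" using herm_cinner[OF hA, of y x] unfolding b_def .
    have bb: "b * cnj b = complex_of_real ((cmod b)^2)" by (rule complex_norm_square[symmetric])
    have ane: "complex_of_real a \<noteq> 0" using apos by simp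
    have 1: "t * cnj b = - (b * cnj b) / complex_of_real a" by (simp add: t_def)
    have 2: "cnj t * b = - (b * cnj b) / complex_of_real a" by (simp add: t_def mult.commute)
    have 3: "cnj t * t * complex_of_real a = (b * cnj b) / complex_of_real a"
      using ane unfolding t_def by (simp add: divide_simps mult.commute mult.left_commute)
    have e: "qf A (y + t *s x) = qf A y - complex_of_real ((cmod b)^2 / a)"
      unfolding qf_expand[OF hA] cb complex_cnj_cnj qx 1 2 3 bb by (simp add: of_real_divide)
    have "0 \<le> Re (qf A (y + t *s x))"
      using assms(1) by (simp add: psd_def qf_def)
    then have "(cmod b)^2 / a \<le> Re (qf A y)" unfolding e by simp
    then show ?thesis using apos by (simp add: a_def b_def field_simps mult.commute)
  qed
qed

lemma qf_smult: "qf A (c *s x) = cnj c * c * qf A x"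
  by (simp add: qf_def mv_smult cinner_scale_left cinner_scale_right)

lemma mv_axis: "((A::'n::finite cmat) *v axis i 1) $ j = A $ j $ i"
proof -
  have "(\<Sum>k\<in>UNIV. A$j$k * (axis i 1)$k) = (\<Sum>k\<in>UNIV. if k = i then A$j$i else 0)"
    by (rule sum.cong) (auto simp: axis_def)
  then show ?thesis by (simp add: matrix_vector_mult_def)
qed

lemma qf_axis: "qf A (axis i 1) = A $ i $ i"
  by (simp add: qf_def cinner_axis mv_axis)

lemma herm_entry:
  assumes "hermitian A" shows "A $ j $ i = cnj (A $ i $ j)"
proof -
  have "(adj A)$j$i = cnj (A$i$j)" by (simp add: adj_def)
  then show ?thesis using assms by (simp add: hermitian_def)
qed

lemma outer_mv: "outer v *v x = cinner v x *s v"
  by (simp add: outer_def matrix_vector_mult_def cinner_def vec_eq_iff sum_distrib_left sum_distrib_right mult.assoc mult.commute mult.left_commute)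

lemma outer_qf: "qf (outer v) x = complex_of_real ((cmod (cinner v x))^2)"
proof -
  have "qf (outer v) x = cinner v x * cnj (cinner v x)"
    by (simp add: qf_def outer_mv cinner_scale_right cinner_cnj)
  also have "\<dots> = complex_of_real ((cmod (cinner v x))^2)"
    by (rule complex_norm_square[symmetric])
  finally show ?thesis .
qed

lemma adj_outer: "adj (outer v) = outer v"
  by (simp add: adj_def outer_def vec_eq_iff mult.commute)

lemma psd_decomp_aux:
  assumes "finite S"
  shows "\<forall>\<rho>::'n::finite cmat. psd \<rho> \<and> (\<forall>i j. (i \<notin> S \<or> j \<notin> S) \<longrightarrow> \<rho>$i$j = 0) \<longrightarrow>
           (\<exists>vs. \<rho> = sum_list (map outer vs))"
  using assms
proof (induction S rule: finite_induct)
  case empty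
  show ?case
  proof (intro allI impI)
    fix \<rho> :: "'n cmat"
    assume "psd \<rho> \<and> (\<forall>i j. (i \<notin> {} \<or> j \<notin> {}) \<longrightarrow> \<rho>$i$j = 0)"
    then have "\<rho> = 0" by (simp add: vec_eq_iff)
    then show "\<exists>vs. \<rho> = sum_list (map outer vs)" by (intro exI[of _ "[]"]) simp
  qed
next
  case (insert i S)
  show ?case
  proof (intro allI impI)
    fix \<rho> :: "'n cmat"
    assume asm: "psd \<rho> \<and> (\<forall>p q. (p \<notin> insert i S \<or> q \<notin> insert i S) \<longrightarrow> \<rho>$p$q = 0)"
    then have ps: "psd \<rho>" and supp: "\<And>p q. p \<notin> insert i S \<or> q \<notin> insert i S \<Longrightarrow> \<rho>$p$q = 0"
      by auto
    have hr: "hermitian \<rho>" using ps by (simp add: psd_def)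
    define a where "a = Re (\<rho>$i$i)"
    have rii: "\<rho>$i$i = complex_of_real a"
      using qf_real[OF hr, of "axis i 1"] unfolding qf_axis a_def .
    have a0: "a \<ge> 0" using ps unfolding psd_def by (metis a_def qf_axis qf_def)
    show "\<exists>vs. \<rho> = sum_list (map outer vs)"
    proof (cases "a = 0")
      case True
      have "\<rho> *v axis i 1 = 0" using psd_kernel[OF ps, of "axis i 1"] True
        by (simp add: qf_axis a_def)
      then have col: "\<rho>$p$i = 0" for p using mv_axis[of \<rho> i p] by simp
      have row: "\<rho>$i$p = 0" for p using col[of p] herm_entry[OF hr, of i p] by simp
      have "\<forall>p q. (p \<notin> S \<or> q \<notin> S) \<longrightarrow> \<rho>$p$q = 0"
        using supp col row by (metis insert_iff)
      then show ?thesis using insert.IH ps by blast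
    next
      case False
      then have apos: "a > 0" using a0 by simp
      define v where "v = complex_of_real (1 / sqrt a) *s (\<rho> *v axis i 1)"
      have vj: "v$j = \<rho>$j$i / complex_of_real (sqrt a)" for j
        by (simp add: v_def mv_axis divide_inverse mult.commute of_real_inverse)
      define \<rho>' where "\<rho>' = \<rho> - outer v"
      have sq: "complex_of_real (sqrt a) * complex_of_real (sqrt a) = complex_of_real a"
        using apos by (simp add: of_real_mult[symmetric] del: of_real_mult)
      have hr': "hermitian \<rho>'" using hr by (simp add: \<rho>'_def hermitian_def adj_diff adj_outer)
      have psd': "psd \<rho>'"
        unfolding psd_def
      proof (intro conjI hr' allI)
        fix x
        have cv: "cinner v x = complex_of_real (1 / sqrt a) * cinner (axis i 1) (\<rho> *v x)"
          using hr by (simp add: v_def cinner_scale_left cinner_adj[of "axis i 1" \<rho> x] hermitian_def)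
        have cs: "(cmod (cinner (axis i 1) (\<rho> *v x)))^2 \<le> a * Re (qf \<rho> x)"
          using psd_CS[OF ps, of "axis i 1" x] by (simp add: qf_axis a_def)
        have "(cmod (cinner v x))^2 = (cmod (cinner (axis i 1) (\<rho> *v x)))^2 / a"
          using apos by (simp add: cv norm_mult power_mult_distrib norm_inverse power_inverse divide_inverse mult.commute)
        also have "\<dots> \<le> Re (qf \<rho> x)" using cs apos by (simp add: divide_le_eq mult.commute)
        finally have "(cmod (cinner v x))^2 \<le> Re (qf \<rho> x)" .
        moreover have "qf \<rho>' x = qf \<rho> x - qf (outer v) x"
          by (simp add: \<rho>'_def qf_def matrix_vector_mult_diff_rdistrib cinner_diff_right)
        ultimately show "0 \<le> Re (cinner x (\<rho>' *v x))"
          by (simp add: outer_qf[unfolded qf_def] qf_def)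
      qed
      have supp': "\<forall>p q. (p \<notin> S \<or> q \<notin> S) \<longrightarrow> \<rho>'$p$q = 0"
      proof (intro allI impI)
        fix p q assume pq: "p \<notin> S \<or> q \<notin> S"
        have e: "\<rho>'$p$q = \<rho>$p$q - \<rho>$p$i * cnj (\<rho>$q$i) / complex_of_real a"
          using apos sq by (simp add: \<rho>'_def outer_def vj)
        show "\<rho>'$p$q = 0"
        proof (cases "p = i")
          case True
          have "cnj (\<rho>$q$i) = \<rho>$i$q" using herm_entry[OF hr, of q i] by simp
          then show ?thesis using e True rii apos by simp
        next
          case pi: False
          show ?thesis
          proof (cases "q = i")
            case True
            then show ?thesis using e rii apos by simp
          next
            case False
            then show ?thesis using e pi pq supp[of p q] supp[of p i] supp[of q i] by auto
          qed
        qed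
      qed
      obtain vs where "\<rho>' = sum_list (map outer vs)" using insert.IH psd' supp' by blast
      then have "\<rho> = outer v + sum_list (map outer vs)" by (metis \<rho>'_def add.commute diff_add_cancel)
      then have "\<rho> = sum_list (map outer (v # vs))" by simp
      then show ?thesis by blast
    qed
  qed
qed

lemma psd_decomp: "psd (\<rho>::'n::finite cmat) \<Longrightarrow> \<exists>vs. \<rho> = sum_list (map outer vs)"
  using psd_decomp_aux[of "UNIV::'n set"] by auto

lemma ctrace_zero[simp]: "ctrace 0 = 0"
  by (simp add: ctrace_def)

lemma ctrace_sum_list_outer: "ctrace (A ** sum_list (map outer vs)) = (\<Sum>v\<leftarrow>vs. qf A v)"
  by (induction vs) (simp_all add: matrix_add_ldistrib ctrace_add ctrace_outer qf_def)

lemma ctrace_psd_nonneg: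
  assumes "psd Q" "psd \<rho>"
  shows "0 \<le> Re (ctrace (Q ** \<rho>))"
proof -
  obtain vs where v: "\<rho> = sum_list (map outer vs)" using psd_decomp[OF assms(2)] by blast
  have "Re (ctrace (Q ** \<rho>)) = (\<Sum>v\<leftarrow>vs. Re (qf Q v))"
    unfolding v ctrace_sum_list_outer by (induction vs) simp_all
  also have "\<dots> \<ge> 0"
    using assms(1) by (intro sum_list_nonneg) (auto simp: psd_def qf_def)
  finally show ?thesis .
qed

lemma ctrace_lower:
  assumes "psd \<rho>" "\<And>x. m * (norm x)^2 \<le> Re (qf W x)"
  shows "m * Re (ctrace \<rho>) \<le> Re (ctrace (W ** \<rho>))"
proof -
  obtain vs where v: "\<rho> = sum_list (map outer vs)" using psd_decomp[OF assms(1)] by blast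
  have t: "ctrace \<rho> = (\<Sum>v\<leftarrow>vs. qf (mat 1) v)"
    using ctrace_sum_list_outer[of "mat 1" vs] v by simp
  have "m * Re (ctrace \<rho>) = (\<Sum>v\<leftarrow>vs. m * (norm v)^2)"
    unfolding t
    by (induction vs) (simp_all add: qf_def cinner_self distrib_left)
  also have "\<dots> \<le> (\<Sum>v\<leftarrow>vs. Re (qf W v))"
    using assms(2) by (intro sum_list_mono) 
  also have "\<dots> = Re (ctrace (W ** \<rho>))"
    unfolding v ctrace_sum_list_outer by (induction vs) simp_all
  finally show ?thesis .
qed

lemma ctrace_herm_real:
  assumes "hermitian A" "hermitian B"
  shows "ctrace (A ** B) = complex_of_real (Re (ctrace (A ** B)))"
proof -
  have "cnj (ctrace (A ** B)) = ctrace (A ** B)"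
  proof -
    have "cnj (ctrace (A ** B)) = ctrace (adj (A ** B))" by (simp add: ctrace_adj)
    also have "\<dots> = ctrace (B ** A)" using assms by (simp add: adj_mult hermitian_def)
    also have "\<dots> = ctrace (A ** B)" by (rule ctrace_comm)
    finally show ?thesis .
  qed
  then have "Im (ctrace (A ** B)) = 0" by (metis cnj.sel(2) neg_equal_zero)
  then show ?thesis by (simp add: complex_eq_iff)
qed

definition dis :: "'n::finite cmat \<Rightarrow> 'n cmat \<Rightarrow> 'n cmat" where
  "dis M \<rho> = M ** \<rho> ** adj M - cscale (1/2) (adj M ** M ** \<rho>) - cscale (1/2) (\<rho> ** adj M ** M)"

lemma lindblad_alt: "lindblad H L K \<rho> = cscale (- \<i>) (H ** \<rho> - \<rho> ** H) + (\<Sum>k\<in>{1..K}. dis (L k) \<rho>)"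
  by (simp add: lindblad_def dis_def)

lemma mm_add_r: "((A::'n::finite cmat) + B) ** C = A ** C + B ** C"
  by (simp add: matrix_matrix_mult_def vec_eq_iff distrib_right sum.distrib)
lemma mm_diff_r: "((A::'n::finite cmat) - B) ** C = A ** C - B ** C"
  by (simp add: matrix_matrix_mult_def vec_eq_iff left_diff_distrib sum_subtractf)
lemma mm_diff_l: "(A::'n::finite cmat) ** (B - C) = A ** B - A ** C"
  by (simp add: matrix_matrix_mult_def vec_eq_iff right_diff_distrib sum_subtractf)
lemma mm_sum_l: "(A::'n::finite cmat) ** (sum f S :: 'n cmat) = (\<Sum>s\<in>S. A ** f s)"
proof (induction S rule: infinite_finite_induct)
  case (insert x F) then show ?case by (simp add: matrix_add_ldistrib)
qed simp_all
lemma mm_sum_r: "(sum f S :: 'n::finite cmat) ** (A::'n::finite cmat) = (\<Sum>s\<in>S. f s ** A)"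
proof (induction S rule: infinite_finite_induct)
  case (insert x F) then show ?case by (simp add: mm_add_r)
qed simp_all

lemma dis_add: "dis M (A + B) = dis M A + dis M B"
  unfolding dis_def by (simp add: matrix_add_ldistrib mm_add_r cscale_add algebra_simps)
lemma dis_cscale: "dis M (cscale c A) = cscale c (dis M A)"
  unfolding dis_def by (simp add: cscale_mult_left cscale_mult_right cscale_diff cscale_cscale mult.commute)

lemma lindblad_add: "lindblad H L K (A + B) = lindblad H L K A + lindblad H L K B"
  unfolding lindblad_alt by (simp add: dis_add sum.distrib matrix_add_ldistrib mm_add_r cscale_add cscale_diff algebra_simps)

lemma lindblad_cscale: "lindblad H L K (cscale c A) = cscale c (lindblad H L K A)"
  unfolding lindblad_alt
  by (simp add: dis_cscale cscale_sum[symmetric] cscale_mult_left cscale_mult_right cscale_add cscale_diff cscale_cscale mult.commute)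

lemma lindblad_scaleR: "lindblad H L K (r *\<^sub>R A) = r *\<^sub>R lindblad H L K A"
  using lindblad_cscale[of H L K "complex_of_real r" A] by (simp add: cscale_of_real)

lemma dis_diff: "dis M (A - B) = dis M A - dis M B"
  unfolding dis_def by (simp add: mm_diff_l mm_diff_r cscale_diff algebra_simps)

lemma lindblad_diff: "lindblad H L K (A - B) = lindblad H L K A - lindblad H L K B"
  unfolding lindblad_alt by (simp add: dis_diff sum_subtractf mm_diff_l mm_diff_r cscale_diff cscale_add algebra_simps)

lemma cscale_neg_swap: "cscale (- c) (Y - X) = cscale c (X - Y)"
  by (simp add: cscale_def vec_eq_iff algebra_simps)

lemma adj_dis: "adj (dis M A) = dis M (adj A)"
  unfolding dis_def by (simp add: adj_diff adj_add adj_cscale adj_mult matrix_mul_assoc algebra_simps)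

lemma lindblad_adj:
  assumes "hermitian H"
  shows "adj (lindblad H L K A) = lindblad H L K (adj A)"
  using assms unfolding lindblad_alt hermitian_def
  by (simp add: adj_add adj_sum adj_dis adj_cscale adj_diff adj_mult cscale_neg_swap)

lemma cinner_mv_add: "cinner x ((A + B) *v y) = cinner x (A *v y) + cinner x (B *v y)"
  by (simp add: matrix_vector_mult_add_rdistrib cinner_add_right)
lemma cinner_mv_diff: "cinner x ((A - B) *v y) = cinner x (A *v y) - cinner x (B *v y)"
  by (simp add: matrix_vector_mult_diff_rdistrib cinner_diff_right)
lemma cinner_mv_cscale: "cinner x (cscale c A *v y) = c * cinner x (A *v y)"
  by (simp add: cscale_mv cinner_scale_right)
lemma cinner_mv_sum: "cinner x ((sum f S :: 'n::finite cmat) *v y) = (\<Sum>s\<in>S. cinner x (f s *v y))"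
  by (simp add: sum_mv cinner_sum_right)

lemma dis_contact:
  assumes h: "hermitian A" and k: "A *v x = 0"
  shows "cinner x (dis M A *v x) = qf A (adj M *v x)"
proof -
  have 1: "cinner x ((M ** A ** adj M) *v x) = qf A (adj M *v x)"
    by (simp add: qf_def matrix_vector_mul_assoc[symmetric] cinner_adj[of x M])
  have 2: "cinner x ((adj M ** M ** A) *v x) = 0"
    by (simp add: matrix_vector_mul_assoc[symmetric] k)
  have 3: "cinner x ((A ** adj M ** M) *v x) = 0"
    using h k by (simp add: matrix_vector_mul_assoc[symmetric] cinner_adj[of x A] hermitian_def)
  show ?thesis unfolding dis_def cinner_mv_diff cinner_mv_cscale 1 2 3 by simp
qed

lemma lindblad_contact:
  assumes hH: "hermitian H" and p: "psd A" and k: "A *v x = 0"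
  shows "0 \<le> Re (qf (lindblad H L K A) x)"
proof -
  have h: "hermitian A" using p by (simp add: psd_def)
  have 1: "cinner x ((H ** A) *v x) = 0"
    by (simp add: matrix_vector_mul_assoc[symmetric] k)
  have 2: "cinner x ((A ** H) *v x) = 0"
    using h k by (simp add: matrix_vector_mul_assoc[symmetric] cinner_adj[of x A] hermitian_def)
  have "qf (lindblad H L K A) x = (\<Sum>k\<in>{1..K}. qf A (adj (L k) *v x))"
    unfolding qf_def lindblad_alt cinner_mv_add cinner_mv_cscale cinner_mv_diff 1 2 cinner_mv_sum
      dis_contact[OF h k, unfolded qf_def] by simp
  then have "Re (qf (lindblad H L K A) x) = (\<Sum>k\<in>{1..K}. Re (qf A (adj (L k) *v x)))" by simp
  also have "\<dots> \<ge> 0" using p by (intro sum_nonneg) (simp add: psd_def qf_def)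
  finally show ?thesis .
qed

lemma trace_dis: "ctrace (X ** dis M \<rho>) = ctrace (gen M X ** \<rho>)"
proof -
  have 1: "ctrace (X ** (M ** \<rho> ** adj M)) = ctrace (adj M ** X ** M ** \<rho>)"
    using ctrace_comm[of "X ** M ** \<rho>" "adj M"] by (simp add: matrix_mul_assoc)
  have 2: "ctrace (X ** (\<rho> ** adj M ** M)) = ctrace (adj M ** M ** X ** \<rho>)"
    using ctrace_comm[of "X ** \<rho>" "adj M ** M"] by (simp add: matrix_mul_assoc)
  have 3: "ctrace (X ** (adj M ** M ** \<rho>)) = ctrace (X ** adj M ** M ** \<rho>)"
    by (simp add: matrix_mul_assoc)
  show ?thesis
    unfolding dis_def gen_def mm_diff_l mm_diff_r cscale_mult_left cscale_mult_right ctrace_diff ctrace_cscale 1 2 3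
    by simp
qed

lemma trace_lindblad:
  assumes c: "H ** X = X ** H"
  shows "ctrace (X ** lindblad H L K \<rho>) = ctrace ((\<Sum>k\<in>{1..K}. gen (L k) X) ** \<rho>)"
proof -
  have 1: "ctrace (X ** (H ** \<rho>)) = ctrace (X ** (\<rho> ** H))"
  proof -
    have "ctrace (X ** (\<rho> ** H)) = ctrace (H ** (X ** \<rho>))"
      using ctrace_comm[of "X ** \<rho>" H] by (simp add: matrix_mul_assoc)
    also have "\<dots> = ctrace (X ** (H ** \<rho>))" using c by (simp add: matrix_mul_assoc)
    finally show ?thesis by simp
  qed
  show ?thesis
    unfolding lindblad_alt matrix_add_ldistrib ctrace_add cscale_mult_right ctrace_cscale mm_diff_l ctrace_diff 1
      mm_sum_l mm_sum_r ctrace_sum trace_dis by simp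
qed

lemma gen_one: "gen M (mat 1) = 0"
  by (simp add: gen_def cscale_def vec_eq_iff)

lemma trace_lindblad_zero: "ctrace (lindblad H L K \<rho>) = 0"
  using trace_lindblad[of H "mat 1" L K \<rho>] by (simp add: gen_one)

lemma gen_herm: "hermitian X \<Longrightarrow> hermitian (gen M X)"
  unfolding hermitian_def gen_def
  by (simp add: adj_diff adj_add adj_cscale adj_mult matrix_mul_assoc algebra_simps)

lemma qf_add: "qf (A + B) x = qf A x + qf B x"
  by (simp add: qf_def cinner_mv_add)
lemma qf_diff: "qf (A - B) x = qf A x - qf B x"
  by (simp add: qf_def cinner_mv_diff)
lemma qf_scaleR: "qf (r *\<^sub>R A) x = complex_of_real r * qf A x"
  by (metis qf_def cinner_mv_cscale cscale_of_real)
lemma qf_one: "qf (mat 1) x = complex_of_real ((norm x)^2)"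
  by (simp add: qf_def cinner_self)
lemma vec_scaleR_smult: "r *\<^sub>R (x::complex^'n::finite) = complex_of_real r *s x"
  by (simp add: vec_eq_iff scaleR_conv_of_real[where 'a=complex])
lemma qf_scaleR_vec: "qf A (r *\<^sub>R x) = complex_of_real (r^2) * qf A x"
  by (simp add: vec_scaleR_smult qf_smult power2_eq_square)

lemma linear_qf: "linear (\<lambda>A::'n::finite cmat. Re (qf A x))"
  by (rule linearI) (simp_all add: qf_add qf_scaleR)
lemma bl_qf: "bounded_linear (\<lambda>A::'n::finite cmat. Re (qf A x))"
  using linear_qf linear_conv_bounded_linear by blast

lemma qf_bound:
  assumes "norm x \<le> 1"
  shows "cmod (qf A x) \<le> (\<Sum>i\<in>UNIV. \<Sum>j\<in>UNIV. cmod (A$i$j))"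
proof -
  have le1: "cmod (x$i) \<le> 1" for i using Finite_Cartesian_Product.norm_nth_le[of x i] assms by simp
  have "cmod (qf A x) = cmod (\<Sum>i\<in>UNIV. \<Sum>j\<in>UNIV. cnj (x$i) * A$i$j * x$j)"
    by (simp add: qf_def cinner_def matrix_vector_mult_def sum_distrib_left mult.assoc)
  also have "\<dots> \<le> (\<Sum>i\<in>UNIV. cmod (\<Sum>j\<in>UNIV. cnj (x$i) * A$i$j * x$j))"
    by (rule norm_sum)
  also have "\<dots> \<le> (\<Sum>i\<in>UNIV. \<Sum>j\<in>UNIV. cmod (cnj (x$i) * A$i$j * x$j))"
    by (intro sum_mono norm_sum)
  also have "\<dots> \<le> (\<Sum>i\<in>UNIV. \<Sum>j\<in>UNIV. cmod (A$i$j))"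
  proof (intro sum_mono)
    fix i j
    have "cmod (cnj (x$i) * A$i$j * x$j) = cmod (x$i) * cmod (A$i$j) * cmod (x$j)"
      by (simp add: norm_mult)
    also have "\<dots> \<le> 1 * cmod (A$i$j) * 1"
      using le1[of i] le1[of j] by (intro mult_mono) auto
    finally show "cmod (cnj (x$i) * A$i$j * x$j) \<le> cmod (A$i$j)" by simp
  qed
  finally show ?thesis .
qed

lemma psd_unit:
  assumes h: "hermitian A" and u: "\<And>y. norm y = 1 \<Longrightarrow> 0 \<le> Re (qf A y)"
  shows "psd A"
  unfolding psd_def
proof (intro conjI h allI)
  fix x :: "complex^'a"
  show "0 \<le> Re (cinner x (A *v x))"
  proof (cases "x = 0")
    case True then show ?thesis by simp
  next
    case False
    define y where "y = (1 / norm x) *\<^sub>R x"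
    have ny: "norm y = 1" using False by (simp add: y_def)
    have x: "x = norm x *\<^sub>R y" using False by (simp add: y_def)
    have "Re (qf A x) = (norm x)^2 * Re (qf A y)"
      by (subst x, simp add: qf_scaleR_vec)
    also have "\<dots> \<ge> 0" using u[OF ny] by simp
    finally show ?thesis by (simp add: qf_def)
  qed
qed

lemma qf_cont: "continuous_on UNIV (\<lambda>p::(('n::finite cmat) \<times> (complex^'n)). Re (qf (fst p) (snd p)))"
  unfolding qf_def cinner_def matrix_vector_mult_def
  by (intro continuous_intros)

lemma herm_solution_psd:
  fixes \<sigma> :: "real \<Rightarrow> 'n::finite cmat"
  assumes hH: "hermitian H"
    and der: "\<And>t. t \<ge> 0 \<Longrightarrow> (\<sigma> has_vector_derivative lindblad H L K (\<sigma> t)) (at t within {0..})"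
    and herm: "\<And>t. t \<ge> 0 \<Longrightarrow> hermitian (\<sigma> t)"
    and p0: "psd (\<sigma> 0)"
    and t0: "t \<ge> 0"
  shows "psd (\<sigma> t)"
proof -
  define F where "F = lindblad H L K"
  define C where "C = (\<Sum>i\<in>UNIV. \<Sum>j\<in>UNIV. cmod (F (mat 1) $i$j))"
  define M where "M = C + 1"
  have Cb: "Re (qf (F (mat 1)) x) \<le> C" if "norm x = 1" for x
    using qf_bound[of x "F (mat 1)"] that complex_Re_le_cmod[of "qf (F (mat 1)) x"] unfolding C_def
    by linarith
  have contsig: "continuous_on {0..} \<sigma>"
    using der by (auto simp: continuous_on_eq_continuous_within intro: has_vector_derivative_continuous)
  have main: "\<forall>t\<ge>0. \<forall>y. norm y = 1 \<longrightarrow> - (\<epsilon> * exp (M*t)) < Re (qf (\<sigma> t) y)" if epos: "\<epsilon> > 0" for \<epsilon>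
  proof (rule ccontr)
    assume neg: "\<not> (\<forall>t\<ge>0. \<forall>y. norm y = 1 \<longrightarrow> - (\<epsilon> * exp (M*t)) < Re (qf (\<sigma> t) y))"
    define \<tau> where "\<tau> = (\<lambda>t. \<sigma> t + (\<epsilon> * exp (M*t)) *\<^sub>R (mat 1::'n cmat))"
    have q\<tau>: "Re (qf (\<tau> t) y) = Re (qf (\<sigma> t) y) + \<epsilon> * exp (M*t)" if "norm y = 1" for t y
      using that by (simp add: \<tau>_def qf_add qf_scaleR qf_one)
    define S where "S = {t. 0 \<le> t \<and> (\<exists>y\<in>sphere 0 1. Re (qf (\<tau> t) y) \<le> 0)}"
    have Sne: "S \<noteq> {}"
    proof -
      obtain t y where "t \<ge> 0" "norm y = 1" "Re (qf (\<sigma> t) y) \<le> - (\<epsilon> * exp (M*t))"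
        using neg by (auto simp: not_less)
      then have "t \<in> S" using q\<tau>[of y t] unfolding S_def by (intro CollectI conjI bexI[of _ y]) auto
      then show ?thesis by blast
    qed
    have bdd: "bdd_below S" by (auto simp: S_def bdd_below_def)
    have closedS: "closed S"
    proof -
      define \<tau>' where "\<tau>' = (\<lambda>t. \<tau> (max 0 t))"
      have c\<tau>: "continuous_on UNIV \<tau>'"
      proof -
        have "continuous_on {0..} \<tau>" unfolding \<tau>_def by (intro continuous_intros contsig)
        then show ?thesis unfolding \<tau>'_def
          by (rule continuous_on_compose2) (auto intro: continuous_intros)
      qed
      have cg: "continuous_on UNIV (\<lambda>p::(complex^'n) \<times> real. Re (qf (\<tau>' (snd p)) (fst p)))"
      proof -
        have "continuous_on UNIV (\<lambda>p::(complex^'n) \<times> real. (\<tau>' (snd p), fst p))"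
          by (intro continuous_intros continuous_on_compose2[OF c\<tau>]) auto
        from continuous_on_compose2[OF qf_cont this] show ?thesis by simp
      qed
      have T: "closed {p::(complex^'n) \<times> real. Re (qf (\<tau>' (snd p)) (fst p)) \<le> 0}"
        by (rule closed_Collect_le[OF cg continuous_on_const])
      have "closed {t. \<exists>y. y \<in> sphere (0::complex^'n) 1 \<and> (y, t) \<in> {p. Re (qf (\<tau>' (snd p)) (fst p)) \<le> 0}}"
        by (rule closed_compact_projection[OF compact_sphere T])
      moreover have "S = {0..} \<inter> {t. \<exists>y. y \<in> sphere (0::complex^'n) 1 \<and> (y, t) \<in> {p. Re (qf (\<tau>' (snd p)) (fst p)) \<le> 0}}"
        by (auto simp: S_def \<tau>'_def max_def)
      ultimately show ?thesis by (auto intro: closed_Int)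
    qed
    define ts where "ts = Inf S"
    have tsS: "ts \<in> S" using closed_contains_Inf[OF Sne bdd closedS] ts_def by simp
    have ts0: "ts \<ge> 0" using tsS by (simp add: S_def)
    have notS: "t \<notin> S" if "0 \<le> t" "t < ts" for t
      using cInf_lower[of t S] bdd that ts_def by force
    have pos_before: "Re (qf (\<tau> t) y) > 0" if "0 \<le> t" "t < ts" "norm y = 1" for t y
      using notS[OF that(1,2)] that by (force simp: S_def)
    have tspos: "ts > 0"
    proof (rule ccontr)
      assume "\<not> ts > 0" then have "ts = 0" using ts0 by simp
      then obtain y where y: "norm y = 1" "Re (qf (\<tau> 0) y) \<le> 0" using tsS by (auto simp: S_def)
      moreover have "Re (qf (\<sigma> 0) y) \<ge> 0" using p0 by (simp add: psd_def qf_def)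
      ultimately show False using q\<tau>[of y 0] epos by simp
    qed
    obtain x where nx: "norm x = 1" and gx: "Re (qf (\<tau> ts) x) \<le> 0" using tsS by (auto simp: S_def)
    have h\<tau>: "hermitian (\<tau> t)" if "t \<ge> 0" for t
      using herm[OF that] by (simp add: \<tau>_def hermitian_def adj_add adj_scaleR)
    define D where "D = F (\<sigma> ts) + (\<epsilon> * (exp (M*ts) * M)) *\<^sub>R (mat 1::'n cmat)"
    have der\<tau>: "(\<tau> has_vector_derivative D) (at ts)"
    proof -
      have e: "((\<lambda>t. \<epsilon> * exp (M*t)) has_real_derivative \<epsilon> * (exp (M*ts) * M)) (at ts within {0..})"
        by (auto intro!: derivative_eq_intros)
      have "((\<lambda>t. (\<epsilon> * exp (M*t)) *\<^sub>R (mat 1::'n cmat)) has_vector_derivative (\<epsilon> * (exp (M*ts) * M)) *\<^sub>R mat 1) (at ts within {0..})"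
        using has_vector_derivative_scaleR[OF e has_vector_derivative_const[of "mat 1::'n cmat"]] by simp
      from has_vector_derivative_add[OF der[OF ts0] this]
      have "(\<tau> has_vector_derivative D) (at ts within {0..})" by (simp add: \<tau>_def D_def F_def)
      then have "(\<tau> has_vector_derivative D) (at ts within {0<..})"
        by (rule has_vector_derivative_within_subset) auto
      then show ?thesis using has_vector_derivative_within_open[of ts "{0<..}" \<tau> D] tspos by simp
    qed
    have dq: "((\<lambda>t. Re (qf (\<tau> t) y)) has_vector_derivative Re (qf D y)) (at ts)" for y
      using bounded_linear.has_vector_derivative[OF bl_qf der\<tau>] by simp
    have psdts: "psd (\<tau> ts)"
    proof (rule psd_unit[OF h\<tau>[OF ts0]])
      fix y :: "complex^'n" assume ny: "norm y = 1"
      have "isCont (\<lambda>t. Re (qf (\<tau> t) y)) ts"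
        using has_vector_derivative_continuous[OF dq[of y]] by simp
      then have lim: "((\<lambda>t. Re (qf (\<tau> t) y)) \<longlongrightarrow> Re (qf (\<tau> ts) y)) (at_left ts)"
        unfolding isCont_def by (rule tendsto_within_subset) auto
      have ev: "eventually (\<lambda>t. 0 \<le> Re (qf (\<tau> t) y)) (at_left ts)"
        using eventually_at_left_real[OF tspos]
        by (rule eventually_mono) (auto intro: less_imp_le pos_before[OF _ _ ny])
      show "0 \<le> Re (qf (\<tau> ts) y)" using tendsto_lowerbound[OF lim ev] by simp
    qed
    have gx0: "Re (qf (\<tau> ts) x) = 0" using psdts gx unfolding psd_def qf_def by (meson order_antisym)
    have ker: "\<tau> ts *v x = 0" using psd_kernel[OF psdts gx0] .
    have Deq: "D = F (\<tau> ts) + (\<epsilon> * exp (M*ts)) *\<^sub>R (M *\<^sub>R mat 1 - F (mat 1))"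
      unfolding D_def \<tau>_def F_def by (simp add: lindblad_add lindblad_scaleR algebra_simps)
    have Dpos: "Re (qf D x) > 0"
    proof -
      have a: "Re (qf (F (\<tau> ts)) x) \<ge> 0" unfolding F_def by (rule lindblad_contact[OF hH psdts ker])
      have b: "Re (qf (M *\<^sub>R mat 1 - F (mat 1)) x) \<ge> 1"
        using Cb[OF nx] nx by (simp add: qf_diff qf_scaleR qf_one M_def)
      have c: "\<epsilon> * exp (M*ts) > 0" using epos by simp
      have "Re (qf D x) = Re (qf (F (\<tau> ts)) x) + (\<epsilon> * exp (M*ts)) * Re (qf (M *\<^sub>R mat 1 - F (mat 1)) x)"
        unfolding Deq by (simp add: qf_add qf_scaleR)
      also have "\<dots> \<ge> 0 + (\<epsilon> * exp (M*ts)) * 1"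
        using a b c by (intro add_mono mult_left_mono) auto
      finally show ?thesis using c by simp
    qed
    have dg: "((\<lambda>t. Re (qf (\<tau> t) x)) has_real_derivative Re (qf D x)) (at ts)"
      using dq[of x] by (simp add: has_real_derivative_iff_has_vector_derivative)
    obtain d where d: "d > 0" "\<And>h. h > 0 \<Longrightarrow> h < d \<Longrightarrow> Re (qf (\<tau> (ts - h)) x) < Re (qf (\<tau> ts) x)"
      using DERIV_pos_inc_left[OF dg Dpos] by blast
    define h where "h = min d ts / 2"
    have hpos: "h > 0" "h < d" "h < ts" using d(1) tspos by (auto simp: h_def)
    have "Re (qf (\<tau> (ts - h)) x) < 0" using d(2)[OF hpos(1,2)] gx by simp
    moreover have "Re (qf (\<tau> (ts - h)) x) > 0" using pos_before[of "ts - h" x] hpos nx by simp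
    ultimately show False by simp
  qed
  show "psd (\<sigma> t)"
  proof (rule psd_unit[OF herm[OF t0]])
    fix y :: "complex^'n" assume ny: "norm y = 1"
    show "0 \<le> Re (qf (\<sigma> t) y)"
    proof (rule ccontr)
      assume "\<not> 0 \<le> Re (qf (\<sigma> t) y)"
      then have neg: "Re (qf (\<sigma> t) y) < 0" by simp
      define \<epsilon> where "\<epsilon> = - Re (qf (\<sigma> t) y) / (2 * exp (M*t))"
      have epos: "\<epsilon> > 0" using neg by (simp add: \<epsilon>_def divide_neg_pos)
      have "- (\<epsilon> * exp (M*t)) < Re (qf (\<sigma> t) y)" using main[OF epos] t0 ny by blast
      moreover have "\<epsilon> * exp (M*t) = - Re (qf (\<sigma> t) y) / 2" by (simp add: \<epsilon>_def)
      ultimately show False using neg by simp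
    qed
  qed
qed

definition phi :: "complex \<Rightarrow> 'n::finite cmat \<Rightarrow> 'n cmat" where
  "phi c A = cscale c A + cscale (cnj c) (adj A)"

lemma phi_herm: "hermitian (phi c A)"
  by (simp add: hermitian_def phi_def adj_add adj_cscale add.commute)

lemma phi_lindblad: "hermitian H \<Longrightarrow> lindblad H L K (phi c A) = phi c (lindblad H L K A)"
  by (simp add: phi_def lindblad_add lindblad_cscale lindblad_adj)

lemma linear_phi: "linear (phi c :: 'n::finite cmat \<Rightarrow> 'n cmat)"
  by (rule linearI) (simp_all add: phi_def cscale_add adj_add cscale_scaleR_comm adj_scaleR algebra_simps)

lemma bl_phi: "bounded_linear (phi c :: 'n::finite cmat \<Rightarrow> 'n cmat)"
  using linear_phi linear_conv_bounded_linear by blast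

lemma psd_zero: "psd (0::'n::finite cmat)"
  by (simp add: psd_def hermitian_def)

lemma psd_add: "psd A \<Longrightarrow> psd B \<Longrightarrow> psd (A + B)"
  by (auto simp: psd_def hermitian_def adj_add matrix_vector_mult_add_rdistrib cinner_add_right)

lemma psd_sum: "(\<And>i. i \<in> S \<Longrightarrow> psd (f i)) \<Longrightarrow> psd (sum f S)"
proof (induction S rule: infinite_finite_induct)
  case (insert x F) then show ?case by (simp add: psd_add)
qed (simp_all add: psd_zero)

lemma mat_eq0: "(\<And>x. (A::'n::finite cmat) *v x = 0) \<Longrightarrow> A = 0"
proof -
  assume h: "\<And>x. A *v x = 0"
  have "A$j$i = 0" for i j using h[of "axis i 1"] mv_axis[of A i j] by simp
  then show "A = 0" by (simp add: vec_eq_iff)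
qed

lemma phi_solution:
  assumes hH: "hermitian H" and sol: "lindblad_solution H L K \<rho>"
  shows "\<And>t. t \<ge> 0 \<Longrightarrow> ((\<lambda>t. phi c (\<rho> t)) has_vector_derivative lindblad H L K (phi c (\<rho> t))) (at t within {0..})"
  using bounded_linear.has_vector_derivative[OF bl_phi, of \<rho>] sol
  unfolding lindblad_solution_def phi_lindblad[OF hH] by blast

lemma solution_psd:
  assumes hH: "hermitian H" and sol: "lindblad_solution H L K \<rho>" and p0: "psd (\<rho> 0)" and t0: "t \<ge> 0"
  shows "psd (\<rho> t)"
proof -
  have h0: "adj (\<rho> 0) = \<rho> 0" using p0 by (simp add: psd_def hermitian_def)
  have s: "psd (phi (1/2) (\<rho> t))"
  proof (rule herm_solution_psd[OF hH phi_solution[OF hH sol] phi_herm _ t0])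
    have "phi (1/2) (\<rho> 0) = \<rho> 0" using h0 by (simp add: phi_def cscale_def vec_eq_iff)
    then show "psd (phi (1/2) (\<rho> 0))" using p0 by simp
  qed
  have z: "phi c (\<rho> 0) = 0" if "Re c = 0" for c
    using h0 that by (simp add: phi_def cscale_def vec_eq_iff complex_eq_iff algebra_simps)
  have za: "phi (- \<i>/2) (\<rho> 0) = 0" by (rule z) simp
  have zb: "phi (\<i>/2) (\<rho> 0) = 0" by (rule z) simp
  have a: "psd (phi (- \<i>/2) (\<rho> t))"
    using herm_solution_psd[OF hH phi_solution[OF hH sol, where c="- \<i>/2"] phi_herm _ t0] za psd_zero by simp
  have b: "psd (phi (\<i>/2) (\<rho> t))"
    using herm_solution_psd[OF hH phi_solution[OF hH sol, where c="\<i>/2"] phi_herm _ t0] zb psd_zero by simp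
  have ab: "phi (\<i>/2) (\<rho> t) = - phi (- \<i>/2) (\<rho> t)"
    by (simp add: phi_def cscale_def vec_eq_iff)
  have "phi (- \<i>/2) (\<rho> t) *v x = 0" for x
  proof (rule psd_kernel[OF a])
    have "0 \<le> Re (qf (phi (- \<i>/2) (\<rho> t)) x)" using a by (simp add: psd_def qf_def)
    moreover have "0 \<le> Re (qf (phi (\<i>/2) (\<rho> t)) x)" using b by (simp add: psd_def qf_def)
    moreover have "qf (phi (\<i>/2) (\<rho> t)) x = - qf (phi (- \<i>/2) (\<rho> t)) x"
      unfolding ab by (simp add: qf_def cinner_def matrix_vector_mult_def sum_negf)
    ultimately show "Re (qf (phi (- \<i>/2) (\<rho> t)) x) = 0" by simp
  qed
  then have a0: "phi (- \<i>/2) (\<rho> t) = 0" by (rule mat_eq0)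
  have "\<rho> t = phi (1/2) (\<rho> t) + cscale \<i> (phi (- \<i>/2) (\<rho> t))"
    by (simp add: phi_def cscale_def vec_eq_iff algebra_simps)
  then have "\<rho> t = phi (1/2) (\<rho> t)" using a0 by (simp add: cscale_def vec_eq_iff)
  then show ?thesis using s by simp
qed

lemma linear_ctr: "linear (\<lambda>A::'n::finite cmat. Re (ctrace (X ** A)))"
  by (rule linearI) (simp_all add: matrix_add_ldistrib ctrace_add scaleR_mult_right ctrace_scaleR)
lemma bl_ctr: "bounded_linear (\<lambda>A::'n::finite cmat. Re (ctrace (X ** A)))"
  using linear_ctr linear_conv_bounded_linear by blast
lemma linear_ctrace: "linear (ctrace :: 'n::finite cmat \<Rightarrow> complex)"
  by (rule linearI) (simp_all add: ctrace_add ctrace_scaleR)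
lemma bl_ctrace: "bounded_linear (ctrace :: 'n::finite cmat \<Rightarrow> complex)"
  using linear_ctrace linear_conv_bounded_linear by blast

lemma exp_decay_lim: "c > 0 \<Longrightarrow> ((\<lambda>t::real. exp (- c * t)) \<longlongrightarrow> 0) at_top"
proof -
  assume c: "c > 0"
  have "filterlim (\<lambda>t::real. c * t) at_top at_top"
    using c by (intro filterlim_tendsto_pos_mult_at_top[OF tendsto_const _ filterlim_ident])
  then have "filterlim (\<lambda>t::real. - c * t) at_bot at_top"
    by (simp add: filterlim_uminus_at_bot)
  then show ?thesis by (rule filterlim_compose[OF exp_at_bot])
qed

lemma decay_lemma:
  assumes hH: "hermitian H" and sol: "lindblad_solution H L K \<rho>" and p0: "psd (\<rho> 0)"
    and comm: "H ** X = X ** H" and psdX: "psd X"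
    and kK: "k \<in> {1..K}" and c: "c > 0"
    and le1: "loewner_le (gen (L k) X) (cscale (- complex_of_real c) X)"
    and le2: "loewner_le (\<Sum>k'\<in>{1..K} - {k}. gen (L k') X) 0"
  shows "((\<lambda>t. ctrace (X ** \<rho> t)) \<longlongrightarrow> 0) at_top"
proof -
  define u where "u = (\<lambda>t. Re (ctrace (X ** \<rho> t)))"
  have psdt: "psd (\<rho> t)" if "t \<ge> 0" for t using solution_psd[OF hH sol p0 that] .
  have hX: "hermitian X" using psdX by (simp add: psd_def)
  have real: "ctrace (X ** \<rho> t) = complex_of_real (u t)" if "t \<ge> 0" for t
    using ctrace_herm_real[OF hX, of "\<rho> t"] psdt[OF that] by (simp add: psd_def u_def)
  have unn: "u t \<ge> 0" if "t \<ge> 0" for t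
    using ctrace_psd_nonneg[OF psdX psdt[OF that]] by (simp add: u_def)
  define G where "G = (\<Sum>k\<in>{1..K}. gen (L k) X)"
  define P1 where "P1 = cscale (- complex_of_real c) X - gen (L k) X"
  define P2 where "P2 = 0 - (\<Sum>k'\<in>{1..K} - {k}. gen (L k') X)"
  have psd1: "psd P1" using le1 by (simp add: loewner_le_def P1_def)
  have psd2: "psd P2" using le2 by (simp add: loewner_le_def P2_def)
  have Geq: "G = cscale (- complex_of_real c) X - P1 - P2"
    unfolding G_def P1_def P2_def using sum.remove[OF _ kK, of "\<lambda>k. gen (L k) X"] by simp
  have ud: "(u has_real_derivative Re (ctrace (G ** \<rho> t))) (at t within {0..})" if "t \<ge> 0" for t
  proof -
    have "(\<rho> has_vector_derivative lindblad H L K (\<rho> t)) (at t within {0..})"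
      using sol that by (simp add: lindblad_solution_def)
    from bounded_linear.has_vector_derivative[OF bl_ctr[of X] this]
    show ?thesis
      by (simp add: u_def has_real_derivative_iff_has_vector_derivative trace_lindblad[OF comm] G_def)
  qed
  have ule: "Re (ctrace (G ** \<rho> t)) \<le> - c * u t" if "t \<ge> 0" for t
  proof -
    have "ctrace (G ** \<rho> t) = - complex_of_real c * ctrace (X ** \<rho> t) - ctrace (P1 ** \<rho> t) - ctrace (P2 ** \<rho> t)"
      unfolding Geq mm_diff_r ctrace_diff cscale_mult_left ctrace_cscale ..
    then have "Re (ctrace (G ** \<rho> t)) = - c * u t - Re (ctrace (P1 ** \<rho> t)) - Re (ctrace (P2 ** \<rho> t))"
      by (simp add: u_def)
    moreover have "Re (ctrace (P1 ** \<rho> t)) \<ge> 0" by (rule ctrace_psd_nonneg[OF psd1 psdt[OF that]])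
    moreover have "Re (ctrace (P2 ** \<rho> t)) \<ge> 0" by (rule ctrace_psd_nonneg[OF psd2 psdt[OF that]])
    ultimately show ?thesis by linarith
  qed
  have ucont: "continuous_on {0..} u"
    using ud by (auto simp: continuous_on_eq_continuous_within intro: DERIV_continuous)
  have bound: "u t \<le> u 0 * exp (- c * t)" if t0: "t \<ge> 0" for t
  proof -
    define v where "v = (\<lambda>s. exp (c * s) * u s)"
    have "v t \<le> v 0"
    proof (rule DERIV_nonpos_imp_decreasing_open[OF t0])
      fix x assume x: "0 < x" "x < t"
      have "(u has_real_derivative Re (ctrace (G ** \<rho> x))) (at x within {0<..})"
        using x by (intro DERIV_subset[OF ud[of x]]) auto
      then have dx: "(u has_real_derivative Re (ctrace (G ** \<rho> x))) (at x)"
        using x by (simp add: at_within_open[of x "{0<..}"])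
      have e: "((\<lambda>s. exp (c * s)) has_real_derivative exp (c * x) * c) (at x)"
        by (auto intro!: derivative_eq_intros)
      have "(v has_real_derivative (exp (c * x) * c * u x + Re (ctrace (G ** \<rho> x)) * exp (c * x))) (at x)"
        unfolding v_def by (rule DERIV_mult[OF e dx])
      moreover have "exp (c * x) * c * u x + Re (ctrace (G ** \<rho> x)) * exp (c * x) \<le> 0"
      proof -
        have "exp (c * x) * c * u x + Re (ctrace (G ** \<rho> x)) * exp (c * x) = exp (c * x) * (c * u x + Re (ctrace (G ** \<rho> x)))"
          by (simp add: algebra_simps)
        also have "\<dots> \<le> 0" using ule[of x] x by (intro mult_nonneg_nonpos) auto
        finally show ?thesis .
      qed
      ultimately show "\<exists>y. (v has_real_derivative y) (at x) \<and> y \<le> 0" by blast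
    next
      have "continuous_on {0..t} u" by (rule continuous_on_subset[OF ucont]) auto
      moreover have "continuous_on {0..t} (\<lambda>s. exp (c * s))" by (intro continuous_intros)
      ultimately show "continuous_on {0..t} v" unfolding v_def using continuous_on_mult by blast
    qed
    then have "exp (c * t) * u t \<le> u 0" by (simp add: v_def)
    then have "u t \<le> u 0 / exp (c * t)" by (simp add: pos_le_divide_eq mult.commute)
    then show ?thesis by (simp add: exp_minus divide_inverse)
  qed
  have "(u \<longlongrightarrow> 0) at_top"
  proof (rule tendsto_sandwich[of "\<lambda>t. 0" u at_top "\<lambda>t. u 0 * exp (- c * t)"])
    show "eventually (\<lambda>t. 0 \<le> u t) at_top"
      by (rule eventually_mono[OF eventually_ge_at_top[of 0]]) (rule unn)
    show "eventually (\<lambda>t. u t \<le> u 0 * exp (- c * t)) at_top"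
      by (rule eventually_mono[OF eventually_ge_at_top[of 0]]) (rule bound)
    show "((\<lambda>t. u 0 * exp (- c * t)) \<longlongrightarrow> 0) at_top"
      using tendsto_mult[OF tendsto_const exp_decay_lim[OF c], of "u 0"] by simp
  qed simp
  then have "((\<lambda>t. complex_of_real (u t)) \<longlongrightarrow> 0) at_top"
    using tendsto_of_real[of u 0 at_top] by simp
  then show ?thesis
    by (rule Lim_transform_eventually) (rule eventually_mono[OF eventually_ge_at_top[of 0]], rule real[symmetric])
qed

lemma trace_const:
  assumes sol: "lindblad_solution H L K \<rho>" and t0: "t \<ge> 0"
  shows "ctrace (\<rho> t) = ctrace (\<rho> 0)"
proof -
  have d: "((\<lambda>t. ctrace (\<rho> t)) has_vector_derivative 0) (at s within {0..})" if "s \<in> {0..}" for s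
  proof -
    have "(\<rho> has_vector_derivative lindblad H L K (\<rho> s)) (at s within {0..})"
      using sol that by (simp add: lindblad_solution_def)
    from bounded_linear.has_vector_derivative[OF bl_ctrace this]
    show ?thesis by (simp add: trace_lindblad_zero)
  qed
  obtain c where "\<And>s. s \<in> {0..} \<Longrightarrow> ctrace (\<rho> s) = c"
    using has_vector_derivative_zero_constant[OF convex_real_interval(1) d] by blast
  then show ?thesis using t0 by force
qed

lemma min_eig_ge0:
  assumes "psd W" "is_eigenvalue W c"
  shows "Re c \<ge> 0"
proof -
  obtain v where v: "v \<noteq> 0" "W *v v = c *s v" using assms(2) by (auto simp: is_eigenvalue_def)
  have "0 \<le> Re (qf W v)" using assms(1) by (simp add: psd_def qf_def)
  also have "qf W v = c * complex_of_real ((norm v)^2)"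
    by (simp add: qf_def v(2) cinner_scale_right cinner_self)
  finally have "0 \<le> Re c * (norm v)^2" by simp
  moreover have "(norm v)^2 > 0" using v(1) by simp
  ultimately show ?thesis by (simp add: zero_le_mult_iff)
qed

lemma no_kernel_bound:
  fixes W :: "'n::finite cmat"
  assumes p: "psd W" and nk: "\<not> is_eigenvalue W 0"
  shows "\<exists>m>0. \<forall>x. m * (norm x)^2 \<le> Re (qf W x)"
proof -
  have pos: "Re (qf W x) > 0" if "norm x = 1" for x
  proof -
    have "Re (qf W x) \<ge> 0" using p by (simp add: psd_def qf_def)
    moreover have "Re (qf W x) \<noteq> 0"
    proof
      assume "Re (qf W x) = 0"
      then have "W *v x = 0" by (rule psd_kernel[OF p])
      moreover have "x \<noteq> 0" using that by auto
      ultimately have "is_eigenvalue W 0" by (auto simp: is_eigenvalue_def)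
      then show False using nk by simp
    qed
    ultimately show ?thesis by simp
  qed
  have cont: "continuous_on (sphere 0 1) (\<lambda>x::complex^'n. Re (qf W x))"
  proof -
    have "continuous_on (sphere 0 1) (\<lambda>x::complex^'n. (W, x))" by (intro continuous_intros)
    from continuous_on_compose2[OF qf_cont this] show ?thesis by simp
  qed
  obtain x0 where x0: "x0 \<in> sphere (0::complex^'n) 1" "\<forall>y\<in>sphere 0 1. Re (qf W x0) \<le> Re (qf W y)"
    using continuous_attains_inf[OF compact_sphere _ cont] by auto
  define m where "m = Re (qf W x0)"
  have mpos: "m > 0" using pos x0(1) by (simp add: m_def)
  have "m * (norm x)^2 \<le> Re (qf W x)" for x
  proof (cases "x = 0")
    case True then show ?thesis by (simp add: qf_def)
  next
    case False
    define y where "y = (1 / norm x) *\<^sub>R x"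
    have ny: "norm y = 1" using False by (simp add: y_def)
    have x: "x = norm x *\<^sub>R y" using False by (simp add: y_def)
    have "Re (qf W x) = (norm x)^2 * Re (qf W y)"
      by (subst x, simp add: qf_scaleR_vec)
    moreover have "m \<le> Re (qf W y)" using x0(2) ny by (simp add: m_def)
    moreover have "m * (norm x)^2 \<le> Re (qf W y) * (norm x)^2"
      using \<open>m \<le> Re (qf W y)\<close> by (rule mult_right_mono) simp
    ultimately show ?thesis by (simp add: mult.commute)
  qed
  then show ?thesis using mpos by blast
qed

theorem theorem17:
  fixes H :: "'n::finite cmat" and L :: "nat \<Rightarrow> 'n cmat" and K :: nat
    and Wl :: "nat \<Rightarrow> 'n cmat" and N :: nat
  assumes herm_H: "hermitian H"
    and comm: "\<And>l. l \<in> {1..N} \<Longrightarrow> H ** Wl l = Wl l ** H"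
    and psd_W: "\<And>l. l \<in> {1..N} \<Longrightarrow> psd (Wl l)"
    and ground0: "\<And>l. l \<in> {1..N} \<Longrightarrow> is_min_eigenvalue (Wl l) 0"
    and decay: "\<And>l. l \<in> {1..N} \<Longrightarrow> \<exists>k\<in>{1..K}. \<exists>c>0.
          loewner_le (gen (L k) (Wl l)) (cscale (- complex_of_real c) (Wl l)) \<and>
          loewner_le (\<Sum>k'\<in>{1..K} - {k}. gen (L k') (Wl l)) 0"
  shows "agss H L K (\<Sum>l\<in>{1..N}. Wl l)"
  unfolding agss_def
proof (intro allI impI)
  fix d \<rho>
  assume mind: "is_min_eigenvalue (\<Sum>l\<in>{1..N}. Wl l) d"
    and sol: "lindblad_solution H L K \<rho>" and dens: "density (\<rho> 0)"
  define W where "W = (\<Sum>l\<in>{1..N}. Wl l)"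
  have p0: "psd (\<rho> 0)" and tr0: "ctrace (\<rho> 0) = 1" using dens by (auto simp: density_def)
  have psdt: "psd (\<rho> t)" if "t \<ge> 0" for t using solution_psd[OF herm_H sol p0 that] .
  have tr1: "ctrace (\<rho> t) = 1" if "t \<ge> 0" for t using trace_const[OF sol that] tr0 by simp
  have each: "((\<lambda>t. ctrace (Wl l ** \<rho> t)) \<longlongrightarrow> 0) at_top" if l: "l \<in> {1..N}" for l
  proof -
    obtain k c where k: "k \<in> {1..K}" "c > 0"
      "loewner_le (gen (L k) (Wl l)) (cscale (- complex_of_real c) (Wl l))"
      "loewner_le (\<Sum>k'\<in>{1..K} - {k}. gen (L k') (Wl l)) 0"
      using decay[OF l] by blast
    show ?thesis by (rule decay_lemma[OF herm_H sol p0 comm[OF l] psd_W[OF l] k])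
  qed
  have lim: "((\<lambda>t. ctrace (W ** \<rho> t)) \<longlongrightarrow> 0) at_top"
  proof -
    have "((\<lambda>t. \<Sum>l\<in>{1..N}. ctrace (Wl l ** \<rho> t)) \<longlongrightarrow> 0) at_top"
      by (rule tendsto_null_sum) (rule each)
    then show ?thesis by (simp add: W_def mm_sum_r ctrace_sum)
  qed
  have psdW: "psd W" unfolding W_def by (rule psd_sum) (rule psd_W)
  have d0: "d \<ge> 0"
    using min_eig_ge0[OF psdW, of "complex_of_real d"] mind by (simp add: is_min_eigenvalue_def W_def)
  have eig0: "is_eigenvalue W 0"
  proof (rule ccontr)
    assume nk: "\<not> is_eigenvalue W 0"
    obtain m where m: "m > 0" "\<And>x. m * (norm x)^2 \<le> Re (qf W x)"
      using no_kernel_bound[OF psdW nk] by blast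
    have ev: "eventually (\<lambda>t. m \<le> Re (ctrace (W ** \<rho> t))) at_top"
    proof (rule eventually_mono[OF eventually_ge_at_top[of 0]])
      fix t :: real assume t: "t \<ge> 0"
      have "m * Re (ctrace (\<rho> t)) \<le> Re (ctrace (W ** \<rho> t))"
        by (rule ctrace_lower[OF psdt[OF t] m(2)])
      then show "m \<le> Re (ctrace (W ** \<rho> t))" using tr1[OF t] by simp
    qed
    have "((\<lambda>t. Re (ctrace (W ** \<rho> t))) \<longlongrightarrow> 0) at_top"
      using tendsto_Re[OF lim] by simp
    from tendsto_lowerbound[OF this ev] m(1) show False by simp
  qed
  have "d \<le> 0" using mind eig0 by (auto simp: is_min_eigenvalue_def W_def)
  then have "d = 0" using d0 by simp
  then show "((\<lambda>t. ctrace ((\<Sum>l\<in>{1..N}. Wl l) ** \<rho> t)) \<longlongrightarrow> complex_of_real d) at_top"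
    using lim by (simp add: W_def)
qed

end
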